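(* Let $\alpha_1,\dots,\alpha_n$ be non-overlapping sequences of patterns, all of the same length $m$. Then there are a $\lambda$-term $P$ and an integer $l$ such that: (i) for every sequence of values $V_1,\dots,V_n$, every $i$, if $\alpha_i=p_1,\dots,p_m$ then $$P\,\lceil p_1(t_1^1,\dots,t_1^{k_1})\rceil\cdots\lceil p_m(t_m^1,\dots,t_m^{k_m})\rceil\,V_1\cdots V_n\rightarrow_v^k V_i\lceil t_1^1\rceil\cdots\lceil t_1^{k_1}\rceil\cdots\lceil t_m^1\rceil\cdots\lceil t_m^{k_m}\rceil$$ for some $k\le l$, whenever the $t_j^q$ are constructor terms; (ii) $P X_1\cdots X_m V_1\cdots V_n\rightarrow_v^k\bot$ for some $k\le l$, whenever each $X_j$ is either $\bot$ or of the form $\lceil t\rceil$ for a constructor term $t$, and either $X_1,\dots,X_m$ do not unify with any of the sequences $\alpha_1,\dots,\alpha_n$, or some $X_j$ is $\bot$.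
   Context: Fix finitely many constructor symbols $\mathbf{c}_1,\dots,\mathbf{c}_g$, each with an arity. Constructor terms are closed terms built from them; patterns are terms built from constructors and variables. For a pattern $p$ with $k$ variable occurrences, $p(t^1,\dots,t^k)$ denotes the constructor term obtained by replacing these occurrences, from left to right, by constructor terms $t^1,\dots,t^k$. Sequences of patterns are non-overlapping if no sequence of constructor terms is an instance of two distinct ones among them. A sequence $X_1,\dots,X_m$ of Scott encodings unifies with $\alpha_i=p_1,\dots,p_m$ if $X_j=\lceil p_j(t_j^1,\dots,t_j^{k_j})\rceil$ for all $j$, for some constructor terms $t_j^q$. $\lambda$-terms: $M::=x\mid\lambda x.M\mid MN$; values $V::=x\mid\lambda x.M$; weak call-by-value reduction $\rightarrow_v$: $(\lambda x.M)V\rightarrow_v M\{V/x\}$ for values $V$, closed under $ML$ and $LM$ contexts (no reduction under $\lambda$). Scott encoding: $\lceil \mathbf{c}_i(t_1,\dots,t_n)\rceil=\lambda x_1.\cdots\lambda x_g.\lambda y.\,x_i\lceil t_1\rceil\cdots\lceil t_n\rceil$. Error term: $\bot=\lambda x_1.\cdots\lambda x_g.\lambda y.\,y$. *)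

theory Defs
  imports Main
begin

datatype dB = Var nat | Lam dB | App dB dB

fun lift :: "dB \<Rightarrow> nat \<Rightarrow> dB" where
  "lift (Var i) k = (if i < k then Var i else Var (Suc i))"
| "lift (Lam t) k = Lam (lift t (Suc k))"
| "lift (App s t) k = App (lift s k) (lift t k)"

fun subst :: "dB \<Rightarrow> dB \<Rightarrow> nat \<Rightarrow> dB" where
  "subst (Var i) s k = (if k < i then Var (i - 1) else if i = k then s else Var i)"
| "subst (Lam t) s k = Lam (subst t (lift s 0) (Suc k))"
| "subst (App t u) s k = App (subst t s k) (subst u s k)"

fun is_val :: "dB \<Rightarrow> bool" where
  "is_val (Var _) = True"
| "is_val (Lam _) = True"
| "is_val (App _ _) = False"

inductive beta_v :: "dB \<Rightarrow> dB \<Rightarrow> bool" where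
  beta: "is_val V \<Longrightarrow> beta_v (App (Lam M) V) (subst M V 0)"
| appL: "beta_v M M' \<Longrightarrow> beta_v (App M L) (App M' L)"
| appR: "beta_v M M' \<Longrightarrow> beta_v (App L M) (App L M')"

definition apps :: "dB \<Rightarrow> dB list \<Rightarrow> dB" where
  "apps M Ns = foldl App M Ns"

definition lams :: "nat \<Rightarrow> dB \<Rightarrow> dB" where
  "lams n M = (Lam ^^ n) M"

text \<open>Constructors are indexed 0..g-1 (c_{i+1} is index i); ar gives arities.\<close>

datatype cterm = C nat "cterm list"

datatype pat = PVar | PC nat "pat list"

fun wf_ct :: "nat \<Rightarrow> (nat \<Rightarrow> nat) \<Rightarrow> cterm \<Rightarrow> bool" where
  "wf_ct g ar (C c ts) = (c < g \<and> length ts = ar c \<and> (\<forall>t\<in>set ts. wf_ct g ar t))"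

fun wf_pat :: "nat \<Rightarrow> (nat \<Rightarrow> nat) \<Rightarrow> pat \<Rightarrow> bool" where
  "wf_pat g ar PVar = True"
| "wf_pat g ar (PC c ps) = (c < g \<and> length ps = ar c \<and> (\<forall>p\<in>set ps. wf_pat g ar p))"

fun nvars :: "pat \<Rightarrow> nat" where
  "nvars PVar = 1"
| "nvars (PC c ps) = sum_list (map nvars ps)"

text \<open>Instantiation p(t^1,...,t^k): variable occurrences replaced left to right.\<close>
fun inst :: "pat \<Rightarrow> cterm list \<Rightarrow> cterm"
and insts :: "pat list \<Rightarrow> cterm list \<Rightarrow> cterm list" where
  "inst PVar ts = hd ts"
| "inst (PC c ps) ts = C c (insts ps ts)"
| "insts [] ts = []"
| "insts (p # ps) ts = inst p (take (nvars p) ts) # insts ps (drop (nvars p) ts)"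

definition is_instance :: "nat \<Rightarrow> (nat \<Rightarrow> nat) \<Rightarrow> cterm list \<Rightarrow> pat list \<Rightarrow> bool" where
  "is_instance g ar ts ps \<longleftrightarrow> length ts = length ps \<and>
     (\<forall>j<length ps. \<exists>us. length us = nvars (ps ! j) \<and> (\<forall>u\<in>set us. wf_ct g ar u)
                          \<and> ts ! j = inst (ps ! j) us)"

definition non_overlapping :: "nat \<Rightarrow> (nat \<Rightarrow> nat) \<Rightarrow> pat list list \<Rightarrow> bool" where
  "non_overlapping g ar alphas \<longleftrightarrow>
     (\<forall>i<length alphas. \<forall>j<length alphas. i \<noteq> j \<longrightarrow>
        \<not> (\<exists>ts. (\<forall>t\<in>set ts. wf_ct g ar t) \<and> is_instance g ar ts (alphas ! i)
                 \<and> is_instance g ar ts (alphas ! j)))"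

text \<open>enc (c_{i+1}(t_1..t_n)) = \<lambda>x_1..x_g y. x_{i+1} enc t_1 .. enc t_n; x_{i+1} is Var (g - i).\<close>
fun enc :: "nat \<Rightarrow> cterm \<Rightarrow> dB" where
  "enc g (C c ts) = lams (Suc g) (apps (Var (g - c)) (map (enc g) ts))"

definition err :: "nat \<Rightarrow> dB" where
  "err g = lams (Suc g) (Var 0)"

definition unifies :: "nat \<Rightarrow> (nat \<Rightarrow> nat) \<Rightarrow> dB list \<Rightarrow> pat list \<Rightarrow> bool" where
  "unifies g ar Xs alpha \<longleftrightarrow> length Xs = length alpha \<and>
     (\<forall>j<length alpha. \<exists>us. length us = nvars (alpha ! j) \<and> (\<forall>u\<in>set us. wf_ct g ar u)
                          \<and> Xs ! j = enc g (inst (alpha ! j) us))"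

end

theory Submission
  imports Defs
begin


fun cl :: "nat \<Rightarrow> dB \<Rightarrow> bool" where
  "cl k (Var i) = (i < k)"
| "cl k (Lam M) = cl (Suc k) M"
| "cl k (App a b) = (cl k a \<and> cl k b)"

lemma cl_mono: "cl k M \<Longrightarrow> k \<le> k' \<Longrightarrow> cl k' M"
  by (induction M arbitrary: k k') auto

lemma lift_cl: "cl k M \<Longrightarrow> k \<le> k' \<Longrightarrow> lift M k' = M"
  by (induction M arbitrary: k k') auto

lemma subst_cl: "cl k M \<Longrightarrow> k \<le> k' \<Longrightarrow> subst M s k' = M"
  by (induction M arbitrary: k k' s) auto

lemma subst_lift: "subst (lift t k) s k = t"
  by (induction t arbitrary: k s) auto

lemma lift_lift: "i < Suc k \<Longrightarrow> lift (lift t i) (Suc k) = lift (lift t k) i"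
  by (induction t arbitrary: i k) auto

definition liftn :: "nat \<Rightarrow> dB \<Rightarrow> dB" where
  "liftn n t = ((\<lambda>t. lift t 0) ^^ n) t"

lemma liftn_Suc: "liftn (Suc n) t = lift (liftn n t) 0"
  by (simp add: liftn_def)

lemma liftn_Suc': "liftn (Suc n) t = liftn n (lift t 0)"
  by (simp add: liftn_def funpow_Suc_right del: funpow.simps)

lemma lift_liftn: "lift (liftn j t) 0 = lift (liftn j t) j"
proof (induction j)
  case 0 then show ?case by (simp add: liftn_def)
next
  case (Suc j)
  have "lift (liftn (Suc j) t) (Suc j) = lift (lift (liftn j t) j) 0"
    by (simp add: liftn_Suc lift_lift)
  also have "\<dots> = lift (liftn (Suc j) t) 0" using Suc by (simp add: liftn_Suc)
  finally show ?case by simp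
qed

lemma subst_liftn: "subst (liftn (Suc j) t) s j = liftn j t"
  by (metis liftn_Suc lift_liftn subst_lift)

lemma lams_Suc: "lams (Suc n) M = Lam (lams n M)"
  by (simp add: lams_def)
lemma lams_0[simp]: "lams 0 M = M"
  by (simp add: lams_def)

lemma liftn_0[simp]: "liftn 0 t = t" by (simp add: liftn_def)

lemma liftn_lift: "liftn n (lift s 0) = lift (liftn n s) 0"
  by (metis liftn_Suc liftn_Suc')

lemma subst_lams: "subst (lams n M) s k = lams n (subst M (liftn n s) (k + n))"
  by (induction n arbitrary: s k) (simp_all add: lams_Suc liftn_lift liftn_Suc)

lemma cl_lams: "cl k (lams n M) = cl (n + k) M"
  by (induction n arbitrary: k) (simp_all add: lams_Suc)

lemma is_val_lams: "is_val (lams (Suc n) M)"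
  by (simp add: lams_Suc)

lemma apps_Nil[simp]: "apps M [] = M" by (simp add: apps_def)
lemma apps_Cons[simp]: "apps M (N # Ns) = apps (App M N) Ns" by (simp add: apps_def)
lemma apps_append: "apps M (xs @ ys) = apps (apps M xs) ys" by (simp add: apps_def)

lemma cl_apps: "cl k (apps M Ns) = (cl k M \<and> (\<forall>N\<in>set Ns. cl k N))"
  by (induction Ns arbitrary: M) auto

lemma subst_apps: "subst (apps M Ns) s k = apps (subst M s k) (map (\<lambda>N. subst N s k) Ns)"
  by (induction Ns arbitrary: M) auto

fun substs :: "dB \<Rightarrow> dB list \<Rightarrow> dB" where
  "substs M [] = M"
| "substs M (A # As) = substs (subst M (liftn (length As) A) (length As)) As"

lemma substs_App: "substs (App a b) As = App (substs a As) (substs b As)"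
  by (induction As arbitrary: a b) auto

lemma substs_apps: "substs (apps H xs) As = apps (substs H As) (map (\<lambda>x. substs x As) xs)"
  by (induction xs arbitrary: H) (auto simp: substs_App)

lemma substs_cl: "cl 0 M \<Longrightarrow> substs M As = M"
  by (induction As arbitrary: M) (auto simp: subst_cl)

lemma substs_liftn: "substs (liftn (length As) A) As = A"
  by (induction As arbitrary: A) (auto simp: subst_liftn)

lemma substs_Var: "j < length As \<Longrightarrow> substs (Var j) As = As ! (length As - Suc j)"
proof (induction As arbitrary: j)
  case Nil then show ?case by simp
next
  case (Cons B Bs)
  show ?case
  proof (cases "j = length Bs")
    case True then show ?thesis by (simp add: substs_liftn)
  next
    case False
    with Cons.prems have "j < length Bs" by simp
    then show ?thesis using Cons.IH
      by (simp add: nth_Cons' Suc_diff_Suc)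
  qed
qed

lemma beta_lams: "is_val A \<Longrightarrow> beta_v (App (lams (Suc n) M) A) (lams n (subst M (liftn n A) n))"
proof -
  assume "is_val A"
  then have "beta_v (App (Lam (lams n M)) A) (subst (lams n M) A 0)" by (rule beta_v.beta)
  then show ?thesis by (simp add: lams_Suc subst_lams)
qed

lemma relpow_appL: "(beta_v ^^ k) M M' \<Longrightarrow> (beta_v ^^ k) (App M L) (App M' L)"
proof (induction k arbitrary: M')
  case 0 then show ?case by simp
next
  case (Suc k)
  then obtain M'' where "(beta_v ^^ k) M M''" "beta_v M'' M'" by (auto elim: relpowp_Suc_E)
  then show ?case using Suc.IH by (meson beta_v.appL relpowp_Suc_I)
qed

lemma beta_apps: "beta_v M M' \<Longrightarrow> beta_v (apps M Ns) (apps M' Ns)"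
  by (induction Ns arbitrary: M M') (auto intro: beta_v.appL)

lemma relpow_apps: "(beta_v ^^ k) M M' \<Longrightarrow> (beta_v ^^ k) (apps M Ns) (apps M' Ns)"
  by (induction Ns arbitrary: M M') (auto intro: relpow_appL)

definition red :: "dB \<Rightarrow> dB \<Rightarrow> nat \<Rightarrow> bool" where
  "red M N l \<longleftrightarrow> (\<exists>k\<le>l. (beta_v ^^ k) M N)"

lemma red_refl: "red M M l"
  unfolding red_def by (rule exI[of _ 0]) simp

lemma red_trans: "red M N a \<Longrightarrow> red N Q b \<Longrightarrow> red M Q (a + b)"
  unfolding red_def by (meson add_mono relpowp_trans)

lemma red_mono: "red M N a \<Longrightarrow> a \<le> b \<Longrightarrow> red M N b"
  unfolding red_def using le_trans by blast

lemma red_apps: "red M N a \<Longrightarrow> red (apps M Ns) (apps N Ns) a"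
  unfolding red_def by (meson relpow_apps)

lemma relpow_lams: "\<forall>A\<in>set As. is_val A \<Longrightarrow>
   (beta_v ^^ length As) (apps (lams (length As) M) As) (substs M As)"
proof (induction As arbitrary: M)
  case Nil then show ?case by simp
next
  case (Cons A As)
  have "beta_v (apps (App (lams (Suc (length As)) M) A) []) (apps (lams (length As) (subst M (liftn (length As) A) (length As))) [])"
    using beta_lams Cons.prems by simp
  then have s1: "beta_v (App (lams (Suc (length As)) M) A) (lams (length As) (subst M (liftn (length As) A) (length As)))" by simp
  have "beta_v (apps (App (lams (Suc (length As)) M) A) As) (apps (lams (length As) (subst M (liftn (length As) A) (length As))) As)"
    using beta_apps s1 by blast
  moreover have "(beta_v ^^ length As) (apps (lams (length As) (subst M (liftn (length As) A) (length As))) As) (substs M (A # As))"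
    using Cons by simp
  ultimately have "(beta_v ^^ Suc (length As)) (apps (App (lams (Suc (length As)) M) A) As) (substs M (A # As))"
    by (simp only: substs.simps(2)) (rule relpowp_Suc_I2)
  then show ?case by simp
qed

lemma red_lams: "\<forall>A\<in>set As. is_val A \<Longrightarrow> length As = n \<Longrightarrow> red (apps (lams n M) As) (substs M As) n"
  unfolding red_def using relpow_lams by blast



datatype outcome = Succ "cterm list" | Fail | Error

function runo :: "pat list \<Rightarrow> cterm option list \<Rightarrow> outcome" where
  "runo [] [] = Succ []"
| "runo (PVar # ps) (None # os) = Error"
| "runo (PVar # ps) (Some t # os) = (case runo ps os of Succ us \<Rightarrow> Succ (t # us) | r \<Rightarrow> r)"
| "runo (PC c qs # ps) (None # os) = Error"
| "runo (PC c qs # ps) (Some (C c' ts) # os) =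
     (if c = c' \<and> length ts = length qs then runo (qs @ ps) (map Some ts @ os) else Fail)"
| "runo [] (x # os) = Fail"
| "runo (p # ps) [] = Fail"
  by pat_completeness auto
termination by (relation "measure (\<lambda>(ps, os). size_list size ps)") auto


lemma runo_Error_None: "runo ps os = Error \<Longrightarrow> None \<in> set os"
  by (induction ps os rule: runo.induct) (simp_all split: outcome.splits if_splits)

lemma runo_Succ_None: "runo ps os = Succ us \<Longrightarrow> None \<notin> set os"
proof (induction ps os arbitrary: us rule: runo.induct)
  case (3 ps t os)
  then show ?case by (cases "runo ps os") auto
next
  case (5 c qs ps c' ts os)
  then show ?case by (simp split: if_splits)
qed simp_all

lemma runo_Succ_len: "runo ps os = Succ us \<Longrightarrow> length us = sum_list (map nvars ps)"
proof (induction ps os arbitrary: us rule: runo.induct)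
  case (3 ps t os)
  then show ?case by (cases "runo ps os") auto
next
  case (5 c qs ps c' ts os)
  then show ?case by (simp split: if_splits)
qed simp_all

lemma length_insts[simp]: "length (insts ps us) = length ps"
  by (induction ps arbitrary: us) auto

lemma insts_append: "insts (qs @ ps) us = insts qs (take (sum_list (map nvars qs)) us) @ insts ps (drop (sum_list (map nvars qs)) us)"
  by (induction qs arbitrary: us) (simp_all add: drop_take take_take drop_drop add.commute)

lemma runo_insts: "length us = sum_list (map nvars ps) \<Longrightarrow> runo ps (map Some (insts ps us)) = Succ us"
proof (induction ps arbitrary: us rule: measure_induct_rule[of "size_list size"])
  case (less ps)
  show ?case
  proof (cases ps)
    case Nil then show ?thesis using less.prems by simp
  next
    case (Cons p ps')
    show ?thesis
    proof (cases p)
      case PVar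
      with Cons less.prems obtain u us' where us: "us = u # us'" by (cases us) auto
      have "runo ps' (map Some (insts ps' us')) = Succ us'"
        using less.IH[of ps' us'] Cons less.prems us PVar by simp
      then show ?thesis using Cons PVar us by simp
    next
      case (PC c qs)
      let ?k = "sum_list (map nvars qs)"
      have "runo (qs @ ps') (map Some (insts (qs @ ps') us)) = Succ us"
        using less.IH[of "qs @ ps'" us] Cons less.prems PC by simp
      then show ?thesis using Cons PC by (simp add: insts_append)
    qed
  qed
qed

lemma runo_Succ_insts: "runo ps os = Succ us \<Longrightarrow> os = map Some (insts ps us)"
proof (induction ps os arbitrary: us rule: runo.induct)
  case (3 ps t os)
  then show ?case by (cases "runo ps os") auto
next
  case (5 c qs ps c' ts os)
  then have c: "c = c'" "length ts = length qs" and r: "runo (qs @ ps) (map Some ts @ os) = Succ us"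
    by (simp_all split: if_splits)
  have "map Some ts @ os = map Some (insts qs (take (sum_list (map nvars qs)) us)) @ map Some (insts ps (drop (sum_list (map nvars qs)) us))"
    using 5(1)[OF conjI[OF c] r] by (simp add: insts_append)
  then have "map Some ts = map Some (insts qs (take (sum_list (map nvars qs)) us))"
     "os = map Some (insts ps (drop (sum_list (map nvars qs)) us))"
    using c by (simp_all add: append_eq_append_conv)
  then show ?case using c by (simp add: inj_map_eq_map)
qed simp_all

lemma runo_Succ_wf: "runo ps os = Succ us \<Longrightarrow> (\<forall>x\<in>set os. \<forall>t. x = Some t \<longrightarrow> wf_ct g ar t) \<Longrightarrow> \<forall>u\<in>set us. wf_ct g ar u"
proof (induction ps os arbitrary: us rule: runo.induct)
  case (3 ps t os)
  then show ?case by (cases "runo ps os") auto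
next
  case (5 c qs ps c' ts os)
  then have c: "c = c'" "length ts = length qs" and r: "runo (qs @ ps) (map Some ts @ os) = Succ us"
    by (simp_all split: if_splits)
  have "\<forall>x\<in>set (map Some ts @ os). \<forall>t. x = Some t \<longrightarrow> wf_ct g ar t" using 5(3) by auto
  then show ?case using 5(1)[OF conjI[OF c] r] by blast
qed simp_all

lemma insts_nth: "length us = sum_list (map nvars ps) \<Longrightarrow> j < length ps \<Longrightarrow>
   \<exists>vs. length vs = nvars (ps ! j) \<and> set vs \<subseteq> set us \<and> insts ps us ! j = inst (ps ! j) vs"
proof (induction ps arbitrary: us j)
  case Nil then show ?case by simp
next
  case (Cons p ps)
  show ?case
  proof (cases j)
    case 0 then show ?thesis using Cons.prems by (auto intro!: exI[of _ "take (nvars p) us"] dest: in_set_takeD)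
  next
    case (Suc j')
    with Cons.prems have "length (drop (nvars p) us) = sum_list (map nvars ps)" "j' < length ps" by auto
    from Cons.IH[OF this] obtain vs where "length vs = nvars (ps ! j')" "set vs \<subseteq> set (drop (nvars p) us)"
       "insts ps (drop (nvars p) us) ! j' = inst (ps ! j') vs" by blast
    then show ?thesis using Suc by (auto dest: in_set_dropD)
  qed
qed

lemma insts_concat: "length tss = length ps \<Longrightarrow> (\<forall>j<length ps. length (tss ! j) = nvars (ps ! j)) \<Longrightarrow>
   insts ps (concat tss) = map (\<lambda>j. inst (ps ! j) (tss ! j)) [0..<length ps] \<and> length (concat tss) = sum_list (map nvars ps)"
proof (induction ps arbitrary: tss)
  case Nil then show ?case by simp
next
  case (Cons p ps)
  then obtain ts tss' where tss: "tss = ts # tss'" by (cases tss) auto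
  have h: "length tss' = length ps" "\<forall>j<length ps. length (tss' ! j) = nvars (ps ! j)"
    using Cons.prems tss by auto
  have l: "length ts = nvars p" using Cons.prems(2) tss by force
  show ?case using Cons.IH[OF h] l tss by (simp add: map_upt_Suc del: upt_Suc)
qed

lemma wf_inst: shows "(wf_pat g ar p \<longrightarrow> length us = nvars p \<longrightarrow> (\<forall>u\<in>set us. wf_ct g ar u) \<longrightarrow> wf_ct g ar (inst p us))"
  and "((\<forall>p\<in>set ps. wf_pat g ar p) \<longrightarrow> length vs = sum_list (map nvars ps) \<longrightarrow> (\<forall>u\<in>set vs. wf_ct g ar u) \<longrightarrow> (\<forall>t\<in>set (insts ps vs). wf_ct g ar t))"
proof (induction p us and ps vs rule: inst_insts.induct)
  case (1 ts) then show ?case by (cases ts) auto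
next
  case (4 p ps ts) then show ?case by (auto dest: in_set_takeD in_set_dropD)
qed auto



definition vr :: "nat \<Rightarrow> nat \<Rightarrow> dB" where "vr n a = Var (n - Suc a)"

lemma substs_vr: "a < length As \<Longrightarrow> substs (vr (length As) a) As = As ! a"
  by (simp add: vr_def substs_Var)

lemma cl_vr: "a < n \<Longrightarrow> cl n (vr n a)"
  by (simp add: vr_def)

definition itm :: "nat \<Rightarrow> cterm option \<Rightarrow> dB" where
  "itm g x = (case x of None \<Rightarrow> err g | Some t \<Rightarrow> enc g t)"

lemma is_val_enc[simp]: "is_val (enc g t)"
  by (cases t) (simp add: lams_Suc)

lemma is_val_err[simp]: "is_val (err g)"
  by (simp add: err_def lams_Suc)

lemma is_val_itm[simp]: "is_val (itm g x)"
  by (simp add: itm_def split: option.splits)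

lemma cl_enc[simp]: "cl 0 (enc g t)"
proof (induction t rule: enc.induct)
  case (1 g c ts)
  then show ?case by (auto simp: cl_lams cl_apps intro: cl_mono)
qed

lemma cl_err[simp]: "cl 0 (err g)"
  by (simp add: err_def cl_lams)

lemma lams_one: "lams (Suc 0) M = Lam M"
  by (simp add: lams_Suc)

lemma map_substs_cl: "\<forall>x\<in>set xs. cl 0 x \<Longrightarrow> map (\<lambda>x. substs x As) xs = xs"
  by (induction xs) (auto simp: substs_cl)

lemma map_subst_cl: "\<forall>x\<in>set xs. cl 0 x \<Longrightarrow> map (\<lambda>x. subst x s k) xs = xs"
  by (induction xs) (auto simp: subst_cl)

lemma map_substs_enc: "map (\<lambda>x. substs x As) (map (enc g) ts) = map (enc g) ts"
  by (induction ts) (auto simp: substs_cl)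

lemma map_substs_vr: "\<forall>a\<in>set f. a < length As \<Longrightarrow> map (\<lambda>x. substs x As) (map (vr (length As)) f) = map (nth As) f"
  by (induction f) (auto simp: substs_vr)

lemma red_lam1: "is_val X \<Longrightarrow> \<forall>B\<in>set Bs. cl 0 B \<Longrightarrow>
   red (apps (Lam (apps (Var 0) Bs)) (X # rest)) (apps (apps X Bs) rest) 1"
proof -
  assume v: "is_val X" and c: "\<forall>B\<in>set Bs. cl 0 B"
  have "red (apps (lams 1 (apps (Var 0) Bs)) [X]) (substs (apps (Var 0) Bs) [X]) 1"
    using v by (intro red_lams) auto
  also have "substs (apps (Var 0) Bs) [X] = apps X Bs"
    using c by (simp add: subst_apps map_subst_cl)
  finally have "red (apps (lams 1 (apps (Var 0) Bs)) [X]) (apps X Bs) 1" .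
  then have "red (apps (apps (lams 1 (apps (Var 0) Bs)) [X]) rest) (apps (apps X Bs) rest) 1"
    by (rule red_apps)
  then show ?thesis by (simp add: lams_one)
qed

lemma red_enc: "c < g \<Longrightarrow> length Bs = g \<Longrightarrow> \<forall>B\<in>set (Bs @ [E]). is_val B \<Longrightarrow>
   red (apps (enc g (C c ts)) (Bs @ [E])) (apps (Bs ! c) (map (enc g) ts)) (Suc g)"
proof -
  assume a: "c < g" "length Bs = g" "\<forall>B\<in>set (Bs @ [E]). is_val B"
  have "red (apps (enc g (C c ts)) (Bs @ [E])) (substs (apps (Var (g - c)) (map (enc g) ts)) (Bs @ [E])) (Suc g)"
    using a by (simp add: red_lams)
  also have "substs (apps (Var (g - c)) (map (enc g) ts)) (Bs @ [E]) = apps (Bs ! c) (map (enc g) ts)"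
    using a by (simp add: substs_apps substs_Var map_substs_enc nth_append del: map_map)
  finally show ?thesis .
qed

lemma red_err: "length Bs = g \<Longrightarrow> \<forall>B\<in>set (Bs @ [E]). is_val B \<Longrightarrow>
   red (apps (err g) (Bs @ [E])) E (Suc g)"
proof -
  assume a: "length Bs = g" "\<forall>B\<in>set (Bs @ [E]). is_val B"
  have "red (apps (err g) (Bs @ [E])) (substs (Var 0) (Bs @ [E])) (Suc g)"
    using a by (simp add: red_lams err_def)
  also have "substs (Var 0) (Bs @ [E]) = E"
    using a by (simp add: substs_Var nth_append)
  finally show ?thesis .
qed

lemma red_const: "\<forall>A\<in>set As. is_val A \<Longrightarrow> length As = n \<Longrightarrow> cl 0 M \<Longrightarrow> red (apps (lams n M) As) M n"
  using red_lams[of As n M] by (simp add: substs_cl)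

lemma red_perm: "\<forall>A\<in>set As. is_val A \<Longrightarrow> length As = n \<Longrightarrow> cl 0 M \<Longrightarrow> \<forall>a\<in>set f. a < n \<Longrightarrow>
   red (apps (lams n (apps M (map (vr n) f))) As) (apps M (map (nth As) f)) n"
proof -
  assume a: "\<forall>A\<in>set As. is_val A" "length As = n" "cl 0 M" "\<forall>a\<in>set f. a < n"
  have "red (apps (lams n (apps M (map (vr n) f))) As) (substs (apps M (map (vr n) f)) As) n"
    using a by (simp add: red_lams)
  also have "substs (apps M (map (vr n) f)) As = apps M (map (nth As) f)"
    using a map_substs_vr[of f As] by (simp add: substs_apps substs_cl del: map_map)
  finally show ?thesis .
qed



function mach :: "nat \<Rightarrow> (nat \<Rightarrow> nat) \<Rightarrow> dB \<Rightarrow> dB \<Rightarrow> nat \<Rightarrow> pat list \<Rightarrow> nat \<Rightarrow> dB" where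
  "mach g ar F K J [] N = K"
| "mach g ar F K J (PVar # ps) N =
     lams (Suc (length ps + N))
       (apps (Lam (apps (Var 0) (map (\<lambda>c. lams (ar c) (mach g ar F K J ps (Suc N))) [0..<g]
                                  @ [lams (length ps + Suc N) (err g)])))
             (map (vr (Suc (length ps + N))) ([0..<Suc (length ps + N)] @ [0])))"
| "mach g ar F K J (PC c qs # ps) N =
     Lam (apps (Var 0) (map (\<lambda>c'. if c' = c then mach g ar F K J (qs @ ps) N
                                   else lams (ar c' + length ps + N)
                                     (apps F (map (vr (ar c' + length ps + N)) [ar c' + length ps..<ar c' + length ps + J])))
                           [0..<g] @ [lams (length ps + N) (err g)]))"
  by pat_completeness auto
termination by (relation "measure (\<lambda>(g, ar, F, K, J, ps, N). size_list size ps)") auto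

lemma cl0_any: "cl 0 M \<Longrightarrow> cl k M"
  using cl_mono by blast

lemma cl_mach: "J \<le> N \<Longrightarrow> cl 0 F \<Longrightarrow> cl 0 K \<Longrightarrow> cl 0 (mach g ar F K J ps N)"
proof (induction g ar F K J ps N rule: mach.induct)
  case (1 g ar F K J N) then show ?case by simp
next
  case (2 g ar F K J ps N)
  have e: "cl k (err g)" for k using cl0_any[OF cl_err] .
  have m: "x < g \<Longrightarrow> cl k (mach g ar F K J ps (Suc N))" for x k using 2 cl0_any by simp
  show ?case using e m by (simp add: cl_lams cl_apps cl_vr)
next
  case (3 g ar F K J c qs ps N)
  have e: "cl k (err g)" for k using cl0_any[OF cl_err] .
  have m: "x < g \<Longrightarrow> x = c \<Longrightarrow> cl k (mach g ar F K J (qs @ ps) N)" for x k using 3 cl0_any by simp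
  have f: "cl k F" for k using 3 cl0_any by simp
  have v: "\<forall>x\<in>set [ar c' + length ps..<ar c' + length ps + J]. cl (Suc (ar c' + length ps + N)) (vr (ar c' + length ps + N) x)" for c'
    using 3 by (auto simp: vr_def)
  show ?case using e m f v by (auto simp: cl_lams cl_apps)
qed



definition mres :: "nat \<Rightarrow> dB \<Rightarrow> dB \<Rightarrow> nat \<Rightarrow> dB \<Rightarrow> dB list \<Rightarrow> outcome \<Rightarrow> nat \<Rightarrow> bool" where
  "mres g F K J X R r l = (case r of
      Succ us \<Rightarrow> red X (apps K (R @ map (enc g) us)) l
    | Fail \<Rightarrow> red X (apps F (take J R)) l
    | Error \<Rightarrow> red X (err g) l)"

lemma red_trans': "red A B a \<Longrightarrow> red B Q b \<Longrightarrow> a + b \<le> l \<Longrightarrow> red A Q l"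
  using red_trans red_mono by blast

lemma mres_pre: "red X Y a \<Longrightarrow> mres g F K J Y R r b \<Longrightarrow> a + b \<le> l \<Longrightarrow> mres g F K J X R r l"
  unfolding mres_def by (auto split: outcome.splits intro: red_trans')

lemma is_val_lams_gen: "is_val M \<Longrightarrow> is_val (lams n M)"
  by (cases n) (simp_all add: lams_Suc)

lemma is_val_lams_pos: "0 < n \<Longrightarrow> is_val (lams n M)"
  by (cases n) (simp_all add: lams_Suc)

lemma is_val_mach: "is_val F \<Longrightarrow> is_val K \<Longrightarrow> is_val (mach g ar F K J ps N)"
  by (cases "(g, ar, F, K, J, ps, N)" rule: mach.cases) (simp_all add: lams_Suc)

lemma map_nth_off: "length xs = off \<Longrightarrow> J \<le> length R \<Longrightarrow> map (nth (xs @ R)) [off..<off + J] = take J R"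
  by (rule nth_equalityI) (auto simp: nth_append)

lemma ar_le: "c < g \<Longrightarrow> (ar :: nat \<Rightarrow> nat) c \<le> sum ar {..<g}"
  by (rule member_le_sum) auto



lemma mach_red:
  "J \<le> N \<Longrightarrow> 0 < J \<Longrightarrow> cl 0 F \<Longrightarrow> cl 0 K \<Longrightarrow> is_val F \<Longrightarrow> is_val K \<Longrightarrow> \<forall>p\<in>set ps. wf_pat g ar p \<Longrightarrow>
   \<exists>l. \<forall>os R. length os = length ps \<longrightarrow> (\<forall>x\<in>set os. \<forall>t. x = Some t \<longrightarrow> wf_ct g ar t) \<longrightarrow>
      length R = N \<longrightarrow> (\<forall>V\<in>set R. is_val V) \<longrightarrow>
      mres g F K J (apps (mach g ar F K J ps N) (map (itm g) os @ R)) R (runo ps os) l"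
proof (induction g ar F K J ps N rule: mach.induct)
  case (1 g ar F K J N)
  show ?case by (rule exI[of _ 0]) (auto simp: mres_def red_refl)
next
  case (3 g ar F K J c qs ps N)
  have wfc: "c < g" "length qs = ar c" "\<forall>q\<in>set qs. wf_pat g ar q" "\<forall>p\<in>set ps. wf_pat g ar p"
    using 3(8) by auto
  have "\<forall>p\<in>set (qs @ ps). wf_pat g ar p" using wfc by auto
  from 3(1)[of c, OF _ refl 3(2-7) this] wfc(1) obtain l1 where IH:
    "\<forall>os R. length os = length (qs @ ps) \<longrightarrow> (\<forall>x\<in>set os. \<forall>t. x = Some t \<longrightarrow> wf_ct g ar t) \<longrightarrow>
      length R = N \<longrightarrow> (\<forall>V\<in>set R. is_val V) \<longrightarrow>
      mres g F K J (apps (mach g ar F K J (qs @ ps) N) (map (itm g) os @ R)) R (runo (qs @ ps) os) l1"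
    by auto
  define fb where "fb c' = lams (ar c' + length ps + N)
             (apps F (map (vr (ar c' + length ps + N)) [ar c' + length ps..<ar c' + length ps + J]))" for c'
  define Bs where "Bs = map (\<lambda>c'. if c' = c then mach g ar F K J (qs @ ps) N else fb c') [0..<g]"
  define E where "E = lams (length ps + N) (err g)"
  have M: "mach g ar F K J (PC c qs # ps) N = Lam (apps (Var 0) (Bs @ [E]))"
    unfolding Bs_def E_def fb_def by simp
  have clBs: "\<forall>B\<in>set (Bs @ [E]). cl 0 B"
    using 3(2-5) by (auto simp: Bs_def E_def fb_def cl_mach cl_lams cl_apps vr_def intro: cl0_any)
  have valBs: "\<forall>B\<in>set (Bs @ [E]). is_val B"
    using 3(2-7) by (auto simp: Bs_def E_def fb_def is_val_mach is_val_lams_pos intro: is_val_lams_gen)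
  define S where "S = sum ar {..<g}"
  show ?case
  proof (rule exI[of _ "1 + Suc g + l1 + S + length ps + N"], intro allI impI)
    fix os R
    assume os: "length os = length (PC c qs # ps)" and wfo: "\<forall>x\<in>set os. \<forall>t. x = Some t \<longrightarrow> wf_ct g ar t"
      and R: "length R = N" and vR: "\<forall>V\<in>set R. is_val V"
    from os obtain x os' where xos: "os = x # os'" and los': "length os' = length ps" by (cases os) auto
    define rest where "rest = map (itm g) os' @ R"
    have s1: "red (apps (mach g ar F K J (PC c qs # ps) N) (map (itm g) os @ R))
                  (apps (apps (itm g x) (Bs @ [E])) rest) 1"
      unfolding M xos rest_def using clBs red_lam1[of "itm g x" "Bs @ [E]" "map (itm g) os' @ R"] by simp
    have vrest: "\<forall>A\<in>set rest. is_val A" using vR by (auto simp: rest_def)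
    show "mres g F K J (apps (mach g ar F K J (PC c qs # ps) N) (map (itm g) os @ R)) R (runo (PC c qs # ps) os)
           (1 + Suc g + l1 + S + length ps + N)"
    proof (cases x)
      case None
      have s2: "red (apps (apps (itm g x) (Bs @ [E])) rest) (apps E rest) (Suc g)"
        using None valBs by (intro red_apps) (simp add: itm_def red_err Bs_def)
      have s3: "red (apps E rest) (err g) (length ps + N)"
        unfolding E_def using vrest los' R by (intro red_const) (auto simp: rest_def)
      have r: "runo (PC c qs # ps) os = Error" using xos None by simp
      show ?thesis unfolding mres_def r outcome.case
        by (rule red_mono[OF red_trans[OF s1 red_trans[OF s2 s3]]]) simp
    next
      case (Some t)
      obtain c' ts where t: "t = C c' ts" by (cases t)
      have wft: "c' < g" "length ts = ar c'" "\<forall>u\<in>set ts. wf_ct g ar u" using wfo xos Some t by auto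
      have s2: "red (apps (apps (itm g x) (Bs @ [E])) rest) (apps (Bs ! c') (map (enc g) ts @ rest)) (Suc g)"
        using Some t valBs wft red_apps[OF red_enc[of c' g Bs E ts], of rest]
        by (simp add: itm_def Bs_def apps_append)
      show ?thesis
      proof (cases "c' = c")
        case True
        have B: "Bs ! c' = mach g ar F K J (qs @ ps) N" using True wft by (simp add: Bs_def)
        have "mres g F K J (apps (mach g ar F K J (qs @ ps) N) (map (itm g) (map Some ts @ os') @ R)) R
                (runo (qs @ ps) (map Some ts @ os')) l1"
        proof -
          have l: "length (map Some ts @ os') = length (qs @ ps)" using los' wft wfc True by simp
          have w: "\<forall>y\<in>set (map Some ts @ os'). \<forall>t. y = Some t \<longrightarrow> wf_ct g ar t" using wft wfo xos by auto
          show ?thesis using IH l w R vR by blast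
        qed
        moreover have "map (itm g) (map Some ts @ os') @ R = map (enc g) ts @ rest"
          by (simp add: rest_def itm_def)
        moreover have "runo (PC c qs # ps) os = runo (qs @ ps) (map Some ts @ os')"
          using xos Some t True wft wfc by simp
        ultimately have X: "mres g F K J (apps (mach g ar F K J (qs @ ps) N) (map (enc g) ts @ rest)) R
                (runo (PC c qs # ps) os) l1" by metis
        show ?thesis by (rule mres_pre[OF red_trans[OF s1 s2[unfolded B]] X]) simp
      next
        case False
        have B: "Bs ! c' = fb c'" using False wft by (simp add: Bs_def)
        have s3: "red (apps (fb c') (map (enc g) ts @ rest)) (apps F (take J R)) (ar c' + length ps + N)"
        proof -
          have "red (apps (fb c') (map (enc g) ts @ rest))
                 (apps F (map (nth (map (enc g) ts @ rest)) [ar c' + length ps..<ar c' + length ps + J])) (ar c' + length ps + N)"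
            unfolding fb_def using vrest los' R wft 3(2-4) by (intro red_perm) (auto simp: rest_def)
          moreover have "map (nth (map (enc g) ts @ rest)) [ar c' + length ps..<ar c' + length ps + J] = take J R"
            using map_nth_off[of "map (enc g) ts @ map (itm g) os'" "ar c' + length ps" J R] wft los' R 3(2)
            by (simp add: rest_def)
          ultimately show ?thesis by simp
        qed
        have "ar c' \<le> S" using ar_le[OF wft(1)] by (simp add: S_def)
        moreover have "runo (PC c qs # ps) os = Fail" using xos Some t False by simp
        ultimately show ?thesis unfolding mres_def
          by (simp del: mach.simps) (rule red_mono[OF red_trans[OF s1 red_trans[OF s2 s3[folded B]]]], simp)
      qed
    qed
  qed
next
  case (2 g ar F K J ps N)
  have wfps: "\<forall>p\<in>set ps. wf_pat g ar p" using 2(8) by auto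
  have JS: "J \<le> Suc N" using 2(2) by simp
  have "\<exists>l1. \<forall>os R. 0 < g \<longrightarrow> length os = length ps \<longrightarrow> (\<forall>x\<in>set os. \<forall>t. x = Some t \<longrightarrow> wf_ct g ar t) \<longrightarrow>
      length R = Suc N \<longrightarrow> (\<forall>V\<in>set R. is_val V) \<longrightarrow>
      mres g F K J (apps (mach g ar F K J ps (Suc N)) (map (itm g) os @ R)) R (runo ps os) l1"
  proof (cases "0 < g")
    case True
    then show ?thesis using 2(1)[of 0, OF _ JS 2(3-7) wfps] by auto
  qed auto
  then obtain l1 where IH: "\<forall>os R. 0 < g \<longrightarrow> length os = length ps \<longrightarrow> (\<forall>x\<in>set os. \<forall>t. x = Some t \<longrightarrow> wf_ct g ar t) \<longrightarrow>
      length R = Suc N \<longrightarrow> (\<forall>V\<in>set R. is_val V) \<longrightarrow>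
      mres g F K J (apps (mach g ar F K J ps (Suc N)) (map (itm g) os @ R)) R (runo ps os) l1" by blast
  define n where "n = Suc (length ps + N)"
  define Bs where "Bs = map (\<lambda>c. lams (ar c) (mach g ar F K J ps (Suc N))) [0..<g]"
  define E where "E = lams (length ps + Suc N) (err g)"
  define chk where "chk = Lam (apps (Var 0) (Bs @ [E]))"
  have M: "mach g ar F K J (PVar # ps) N = lams n (apps chk (map (vr n) ([0..<n] @ [0])))"
    unfolding Bs_def E_def chk_def n_def by simp
  have clm: "cl 0 (mach g ar F K J ps (Suc N))" using cl_mach[OF JS 2(4,5)] .
  have clBs: "\<forall>B\<in>set (Bs @ [E]). cl 0 B"
    using clm by (auto simp: Bs_def E_def cl_lams intro: cl0_any)
  have clchk: "cl 0 chk" using clBs by (auto simp: chk_def cl_apps intro: cl0_any)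
  have valBs: "\<forall>B\<in>set (Bs @ [E]). is_val B"
    using 2(6,7) by (auto simp: Bs_def E_def is_val_mach is_val_lams_pos intro: is_val_lams_gen)
  define S where "S = sum ar {..<g}"
  show ?case
  proof (rule exI[of _ "n + 1 + Suc g + S + l1 + length ps + Suc N"], intro allI impI)
    fix os R
    assume os: "length os = length (PVar # ps)" and wfo: "\<forall>x\<in>set os. \<forall>t. x = Some t \<longrightarrow> wf_ct g ar t"
      and R: "length R = N" and vR: "\<forall>V\<in>set R. is_val V"
    from os obtain x os' where xos: "os = x # os'" and los': "length os' = length ps" by (cases os) auto
    define As where "As = map (itm g) os @ R"
    have lAs: "length As = n" using os R by (simp add: As_def n_def)
    have vAs: "\<forall>A\<in>set As. is_val A" using vR by (auto simp: As_def)
    define rest where "rest = map (itm g) os' @ R @ [itm g x]"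
    have vrest: "\<forall>A\<in>set rest. is_val A" using vR by (auto simp: rest_def)
    have s0: "red (apps (lams n (apps chk (map (vr n) ([0..<n] @ [0])))) As) (apps chk (map (nth As) ([0..<n] @ [0]))) n"
      using vAs lAs clchk by (intro red_perm) (auto simp: n_def)
    have "map (nth As) ([0..<n] @ [0]) = itm g x # rest"
    proof -
      have "map (nth As) [0..<n] = As" using lAs map_nth[of As] by simp
      then show ?thesis using xos by (simp add: As_def rest_def)
    qed
    note eq = this
    have s0': "red (apps (mach g ar F K J (PVar # ps) N) As) (apps chk (itm g x # rest)) n"
      unfolding M using s0 unfolding eq .
    then have s0'': "red (apps (mach g ar F K J (PVar # ps) N) (map (itm g) os @ R)) (apps chk (itm g x # rest)) n"
      by (simp only: As_def)
    have s1: "red (apps chk (itm g x # rest)) (apps (apps (itm g x) (Bs @ [E])) rest) 1"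
      unfolding chk_def using clBs red_lam1[of "itm g x" "Bs @ [E]" rest] by simp
    show "mres g F K J (apps (mach g ar F K J (PVar # ps) N) (map (itm g) os @ R)) R (runo (PVar # ps) os)
           (n + 1 + Suc g + S + l1 + length ps + Suc N)"
    proof (cases x)
      case None
      have s2: "red (apps (apps (itm g x) (Bs @ [E])) rest) (apps E rest) (Suc g)"
        using None valBs by (intro red_apps) (simp add: itm_def red_err Bs_def)
      have s3: "red (apps E rest) (err g) (length ps + Suc N)"
        unfolding E_def using vrest los' R by (intro red_const) (auto simp: rest_def)
      have r: "runo (PVar # ps) os = Error" using xos None by simp
      show ?thesis unfolding mres_def r outcome.case
        by (rule red_mono[OF red_trans[OF s0'' red_trans[OF s1 red_trans[OF s2 s3]]]]) simp
    next
      case (Some t)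
      obtain c' ts where t: "t = C c' ts" by (cases t)
      have wft: "c' < g" "length ts = ar c'" "\<forall>u\<in>set ts. wf_ct g ar u" using wfo xos Some t by auto
      have s2: "red (apps (apps (itm g x) (Bs @ [E])) rest) (apps (apps (Bs ! c') (map (enc g) ts)) rest) (Suc g)"
        using Some t valBs wft red_apps[OF red_enc[of c' g Bs E ts], of rest]
        by (simp add: itm_def Bs_def)
      have s3: "red (apps (apps (Bs ! c') (map (enc g) ts)) rest) (apps (mach g ar F K J ps (Suc N)) rest) (ar c')"
        using wft clm by (auto simp: Bs_def intro!: red_apps red_const)
      have rest': "rest = map (itm g) os' @ (R @ [enc g t])" by (simp add: rest_def Some itm_def)
      have IH1: "mres g F K J (apps (mach g ar F K J ps (Suc N)) rest) (R @ [enc g t]) (runo ps os') l1"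
      proof -
        have "\<forall>V\<in>set (R @ [enc g t]). is_val V" using vR by auto
        moreover have "\<forall>y\<in>set os'. \<forall>t. y = Some t \<longrightarrow> wf_ct g ar t" using wfo xos by auto
        moreover have "0 < g" using wft by simp
        moreover have "length (R @ [enc g t]) = Suc N" using R by simp
        ultimately show ?thesis unfolding rest' using IH los' by blast
      qed
      have ar: "ar c' \<le> S" using ar_le[OF wft(1)] by (simp add: S_def)
      have st: "red (apps (mach g ar F K J (PVar # ps) N) (map (itm g) os @ R)) (apps (mach g ar F K J ps (Suc N)) rest) (n + 1 + Suc g + S)"
        by (rule red_mono[OF red_trans[OF s0'' red_trans[OF s1 red_trans[OF s2 s3]]]]) (use ar in simp)
      have tk: "take J (R @ [enc g t]) = take J R" using R 2(2) by simp
      show ?thesis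
      proof (cases "runo ps os'")
        case (Succ us)
        then have r: "runo (PVar # ps) os = Succ (t # us)" using xos Some by simp
        from IH1 Succ have "red (apps (mach g ar F K J ps (Suc N)) rest) (apps K ((R @ [enc g t]) @ map (enc g) us)) l1"
          by (simp add: mres_def)
        then show ?thesis unfolding mres_def r outcome.case
          by (intro red_mono[OF red_trans[OF st]]) auto
      next
        case Fail
        then have r: "runo (PVar # ps) os = Fail" using xos Some by simp
        from IH1 Fail have "red (apps (mach g ar F K J ps (Suc N)) rest) (apps F (take J R)) l1"
          unfolding mres_def tk by simp
        then show ?thesis unfolding mres_def r outcome.case
          by (intro red_mono[OF red_trans[OF st]]) auto
      next
        case Error
        then have r: "runo (PVar # ps) os = Error" using xos Some by simp
        from IH1 Error have "red (apps (mach g ar F K J ps (Suc N)) rest) (err g) l1"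
          by (simp add: mres_def)
        then show ?thesis unfolding mres_def r outcome.case
          by (intro red_mono[OF red_trans[OF st]]) auto
      qed
    qed
  qed
qed



definition Kfin :: "nat \<Rightarrow> nat \<Rightarrow> nat \<Rightarrow> nat \<Rightarrow> dB" where
  "Kfin J m i r = lams (J + r) (apps (vr (J + r) (m + i)) (map (vr (J + r)) [J..<J + r]))"

fun trys :: "nat \<Rightarrow> (nat \<Rightarrow> nat) \<Rightarrow> nat \<Rightarrow> nat \<Rightarrow> pat list list \<Rightarrow> nat \<Rightarrow> dB" where
  "trys g ar m J [] i = lams J (err g)"
| "trys g ar m J (a # as) i = lams J (apps (mach g ar (trys g ar m J as (Suc i)) (Kfin J m i (sum_list (map nvars a))) J a J)
      (map (vr J) ([0..<m] @ [0..<J])))"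

fun tryout :: "pat list list \<Rightarrow> nat \<Rightarrow> cterm option list \<Rightarrow> (nat \<times> cterm list) option" where
  "tryout [] i os = None"
| "tryout (a # as) i os = (case runo a os of Succ us \<Rightarrow> Some (i, us) | Fail \<Rightarrow> tryout as (Suc i) os | Error \<Rightarrow> None)"

lemma cl_Kfin: "m + i < J \<Longrightarrow> cl 0 (Kfin J m i r)"
  by (auto simp: Kfin_def cl_lams cl_apps vr_def)

lemma cl_trys: "m + i + length as \<le> J \<Longrightarrow> cl 0 (trys g ar m J as i)"
proof (induction as arbitrary: i)
  case Nil then show ?case using cl0_any[OF cl_err, of J g] by (simp add: cl_lams)
next
  case (Cons a as)
  have c1: "cl 0 (trys g ar m J as (Suc i))" using Cons by simp
  have c2: "cl 0 (Kfin J m i (sum_list (map nvars a)))" using Cons.prems by (intro cl_Kfin) simp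
  have c3: "cl J (mach g ar (trys g ar m J as (Suc i)) (Kfin J m i (sum_list (map nvars a))) J a J)"
    using cl_mach[OF order.refl c1 c2] by (rule cl0_any)
  have c4: "\<forall>x\<in>set ([0..<m] @ [0..<J]). cl J (vr J x)" using Cons.prems by (auto simp: vr_def)
  show ?case using c3 c4 by (auto simp: cl_lams cl_apps)
qed

lemma red_permv: "\<forall>A\<in>set As. is_val A \<Longrightarrow> length As = n \<Longrightarrow> h < n \<Longrightarrow> \<forall>a\<in>set f. a < n \<Longrightarrow>
   red (apps (lams n (apps (vr n h) (map (vr n) f))) As) (apps (As ! h) (map (nth As) f)) n"
proof -
  assume a: "\<forall>A\<in>set As. is_val A" "length As = n" "h < n" "\<forall>a\<in>set f. a < n"
  have "red (apps (lams n (apps (vr n h) (map (vr n) f))) As) (substs (apps (vr n h) (map (vr n) f)) As) n"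
    using a by (simp add: red_lams)
  also have "substs (apps (vr n h) (map (vr n) f)) As = apps (As ! h) (map (nth As) f)"
    using a map_substs_vr[of f As] substs_vr[of h As] by (simp add: substs_apps del: map_map)
  finally show ?thesis .
qed

lemma trys_red:
  assumes J: "J = m + nV" and wf: "\<forall>a\<in>set as. \<forall>p\<in>set a. wf_pat g ar p"
    and i: "i + length as \<le> nV" and lena: "\<forall>a\<in>set as. length a = m"
  shows "\<exists>l. \<forall>os Vs. length os = m \<longrightarrow> (\<forall>x\<in>set os. \<forall>t. x = Some t \<longrightarrow> wf_ct g ar t) \<longrightarrow>
     length Vs = nV \<longrightarrow> (\<forall>V\<in>set Vs. is_val V) \<longrightarrow>
     (case tryout as i os of
        None \<Rightarrow> red (apps (trys g ar m J as i) (map (itm g) os @ Vs)) (err g) l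
      | Some (i', us) \<Rightarrow> red (apps (trys g ar m J as i) (map (itm g) os @ Vs)) (apps (Vs ! i') (map (enc g) us)) l)"
  using wf i lena
proof (induction as arbitrary: i)
  case Nil
  show ?case using J by (auto intro!: exI[of _ J] red_const)
next
  case (Cons a as)
  from Cons.IH[of "Suc i"] Cons.prems obtain l2 where IH:
    "\<forall>os Vs. length os = m \<longrightarrow> (\<forall>x\<in>set os. \<forall>t. x = Some t \<longrightarrow> wf_ct g ar t) \<longrightarrow>
     length Vs = nV \<longrightarrow> (\<forall>V\<in>set Vs. is_val V) \<longrightarrow>
     (case tryout as (Suc i) os of
        None \<Rightarrow> red (apps (trys g ar m J as (Suc i)) (map (itm g) os @ Vs)) (err g) l2
      | Some (i', us) \<Rightarrow> red (apps (trys g ar m J as (Suc i)) (map (itm g) os @ Vs)) (apps (Vs ! i') (map (enc g) us)) l2)"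
    by auto
  define r where "r = sum_list (map nvars a)"
  define F where "F = trys g ar m J as (Suc i)"
  define K where "K = Kfin J m i r"
  have J0: "0 < J" using J Cons.prems by simp
  have clF: "cl 0 F" unfolding F_def using Cons.prems J by (intro cl_trys) simp
  have clK: "cl 0 K" unfolding K_def using Cons.prems J by (intro cl_Kfin) simp
  have vF: "is_val F" unfolding F_def using J0 by (cases as) (simp_all add: is_val_lams_pos)
  have vK: "is_val K" unfolding K_def Kfin_def using J0 by (simp add: is_val_lams_pos)
  have wfa: "\<forall>p\<in>set a. wf_pat g ar p" using Cons.prems by simp
  from mach_red[OF order.refl J0 clF clK vF vK wfa] obtain l1 where MR:
    "\<forall>os R. length os = length a \<longrightarrow> (\<forall>x\<in>set os. \<forall>t. x = Some t \<longrightarrow> wf_ct g ar t) \<longrightarrow>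
      length R = J \<longrightarrow> (\<forall>V\<in>set R. is_val V) \<longrightarrow>
      mres g F K J (apps (mach g ar F K J a J) (map (itm g) os @ R)) R (runo a os) l1" by blast
  show ?case
  proof (rule exI[of _ "J + l1 + (J + r) + l2"], intro allI impI)
    fix os :: "cterm option list" and Vs :: "dB list"
    assume os: "length os = m" and wfo: "\<forall>x\<in>set os. \<forall>t. x = Some t \<longrightarrow> wf_ct g ar t"
      and Vs: "length Vs = nV" and vVs: "\<forall>V\<in>set Vs. is_val V"
    define As where "As = map (itm g) os @ Vs"
    have lAs: "length As = J" using os Vs J by (simp add: As_def)
    have vAs: "\<forall>A\<in>set As. is_val A" using vVs by (auto simp: As_def)
    have T: "trys g ar m J (a # as) i = lams J (apps (mach g ar F K J a J) (map (vr J) ([0..<m] @ [0..<J])))"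
      by (simp add: F_def K_def r_def)
    have s0: "red (apps (trys g ar m J (a # as) i) As) (apps (mach g ar F K J a J) (map (nth As) ([0..<m] @ [0..<J]))) J"
      unfolding T using vAs lAs cl_mach[OF order.refl clF clK] J by (intro red_perm) auto
    have "map (nth As) [0..<J] = As" using lAs map_nth[of As] by simp
    moreover have "map (nth As) [0..<m] = map (itm g) os"
      using os by (intro nth_equalityI) (auto simp: As_def nth_append)
    ultimately have s0': "red (apps (trys g ar m J (a # as) i) As) (apps (mach g ar F K J a J) (map (itm g) os @ As)) J"
      using s0 by simp
    have s0'': "red (apps (trys g ar m J (a # as) i) (map (itm g) os @ Vs)) (apps (mach g ar F K J a J) (map (itm g) os @ As)) J"
      using s0' unfolding As_def .
    have la: "length os = length a" using os Cons.prems by simp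
    have mr: "mres g F K J (apps (mach g ar F K J a J) (map (itm g) os @ As)) As (runo a os) l1"
      using MR la wfo lAs vAs by blast
    show "case tryout (a # as) i os of
        None \<Rightarrow> red (apps (trys g ar m J (a # as) i) (map (itm g) os @ Vs)) (err g) (J + l1 + (J + r) + l2)
      | Some (i', us) \<Rightarrow> red (apps (trys g ar m J (a # as) i) (map (itm g) os @ Vs)) (apps (Vs ! i') (map (enc g) us)) (J + l1 + (J + r) + l2)"
    proof (cases "runo a os")
      case (Succ us)
      have lus: "length us = r" using runo_Succ_len[OF Succ] by (simp add: r_def)
      have m1: "red (apps (mach g ar F K J a J) (map (itm g) os @ As)) (apps K (As @ map (enc g) us)) l1"
        using mr Succ by (simp add: mres_def)
      have k1: "red (apps K (As @ map (enc g) us)) (apps ((As @ map (enc g) us) ! (m + i)) (map (nth (As @ map (enc g) us)) [J..<J + r])) (J + r)"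
        unfolding K_def Kfin_def using lAs lus vAs Cons.prems J by (intro red_permv) auto
      have e1: "(As @ map (enc g) us) ! (m + i) = Vs ! i" using lAs os Cons.prems J by (simp add: nth_append As_def)
      have e2: "map (nth (As @ map (enc g) us)) [J..<J + r] = map (enc g) us"
        using map_nth_off[of As J r "map (enc g) us"] lAs lus by simp
      have "red (apps (trys g ar m J (a # as) i) (map (itm g) os @ Vs)) (apps (Vs ! i) (map (enc g) us)) (J + l1 + (J + r) + l2)"
        using red_trans[OF red_trans[OF s0'' m1] k1[unfolded e1 e2]] by (rule red_mono) simp
      then show ?thesis using Succ by simp
    next
      case Fail
      have m1: "red (apps (mach g ar F K J a J) (map (itm g) os @ As)) (apps F As) l1"
        using mr Fail lAs by (simp add: mres_def)
      have IH1: "case tryout as (Suc i) os of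
        None \<Rightarrow> red (apps F As) (err g) l2
      | Some (i', us) \<Rightarrow> red (apps F As) (apps (Vs ! i') (map (enc g) us)) l2"
        using IH os wfo Vs vVs unfolding F_def As_def by blast
      have st: "red (apps (trys g ar m J (a # as) i) (map (itm g) os @ Vs)) (apps F As) (J + l1)"
        using red_trans[OF s0'' m1] .
      show ?thesis
      proof (cases "tryout as (Suc i) os")
        case None
        then show ?thesis using Fail IH1 by (simp del: trys.simps) (rule red_trans'[OF st], auto)
      next
        case (Some p)
        then show ?thesis using Fail IH1 by (cases p) (simp del: trys.simps, rule red_trans'[OF st], auto)
      qed
    next
      case Error
      have m1: "red (apps (mach g ar F K J a J) (map (itm g) os @ As)) (err g) l1"
        using mr Error by (simp add: mres_def)
      show ?thesis using Error by (simp del: trys.simps) (rule red_mono[OF red_trans[OF s0'' m1]], simp)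
    qed
  qed
qed



lemma tryout_Some: "tryout as k os = Some (i', us) \<Longrightarrow> \<exists>a\<in>set as. runo a os = Succ us"
  by (induction as arbitrary: k) (auto split: outcome.splits)

lemma tryout_first: "jj < length as \<Longrightarrow> (\<forall>j<jj. runo (as ! j) os = Fail) \<Longrightarrow> runo (as ! jj) os = Succ us \<Longrightarrow>
   tryout as k os = Some (k + jj, us)"
proof (induction as arbitrary: k jj)
  case Nil then show ?case by simp
next
  case (Cons a as)
  show ?case
  proof (cases jj)
    case 0 then show ?thesis using Cons.prems by simp
  next
    case (Suc j)
    have "runo a os = Fail" using Cons.prems(2) Suc by (metis nth_Cons_0 zero_less_Suc)
    moreover have "\<forall>ja<j. runo (as ! ja) os = Fail"
    proof (intro allI impI)
      fix ja assume "ja < j"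
      then show "runo (as ! ja) os = Fail" using Cons.prems(2)[rule_format, of "Suc ja"] Suc by simp
    qed
    then have "tryout as (Suc k) os = Some (Suc k + j, us)"
      using Cons.IH[of j "Suc k"] Cons.prems Suc by auto
    ultimately show ?thesis using Suc by simp
  qed
qed

lemma apps_Var: "apps M xs = Var k \<Longrightarrow> xs = [] \<and> M = Var k"
  by (induction xs arbitrary: M) auto

lemma lams_inj: "lams n a = lams n b \<Longrightarrow> a = b"
  by (induction n) (auto simp: lams_Suc)

lemma enc_ne_err: "wf_ct g ar t \<Longrightarrow> enc g t \<noteq> err g"
proof (cases t)
  case (C c ts)
  assume w: "wf_ct g ar t"
  show ?thesis
  proof
    assume "enc g t = err g"
    then have "apps (Var (g - c)) (map (enc g) ts) = Var 0"
      using C by (auto simp: err_def dest: lams_inj)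
    then show False using w C by (auto dest: apps_Var)
  qed
qed

lemma runo_Succ_instance:
  assumes r: "runo a (map Some ts) = Succ us" and w: "\<forall>t\<in>set ts. wf_ct g ar t"
  shows "length ts = length a \<and> (\<forall>j<length a. \<exists>vs. length vs = nvars (a ! j) \<and> (\<forall>u\<in>set vs. wf_ct g ar u)
                          \<and> ts ! j = inst (a ! j) vs)"
proof -
  have e: "ts = insts a us" using runo_Succ_insts[OF r] by (simp add: inj_map_eq_map)
  have l: "length us = sum_list (map nvars a)" using runo_Succ_len[OF r] .
  have wu: "\<forall>u\<in>set us. wf_ct g ar u" using runo_Succ_wf[OF r] w by auto
  show ?thesis
  proof (intro conjI allI impI)
    show "length ts = length a" using e by simp
  next
    fix j assume "j < length a"
    from insts_nth[OF l this] obtain vs where "length vs = nvars (a ! j)" "set vs \<subseteq> set us"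
      "insts a us ! j = inst (a ! j) vs" by blast
    then show "\<exists>vs. length vs = nvars (a ! j) \<and> (\<forall>u\<in>set vs. wf_ct g ar u) \<and> ts ! j = inst (a ! j) vs"
      using e wu by auto
  qed
qed

theorem lemma9:
  fixes g :: nat and ar :: "nat \<Rightarrow> nat" and alphas :: "pat list list" and m :: nat
  assumes wf: "\<forall>a\<in>set alphas. \<forall>p\<in>set a. wf_pat g ar p"
    and len: "\<forall>a\<in>set alphas. length a = m"
    and novl: "non_overlapping g ar alphas"
  shows "\<exists>P (l::nat).
     (\<forall>Vs i tss. length Vs = length alphas \<longrightarrow> (\<forall>V\<in>set Vs. is_val V) \<longrightarrow> i < length alphas \<longrightarrow>
        length tss = m \<longrightarrow> (\<forall>j<m. length (tss ! j) = nvars (alphas ! i ! j)) \<longrightarrow>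
        (\<forall>ts\<in>set tss. \<forall>t\<in>set ts. wf_ct g ar t) \<longrightarrow>
        (\<exists>k\<le>l. (beta_v ^^ k)
                  (apps P (map (\<lambda>j. enc g (inst (alphas ! i ! j) (tss ! j))) [0..<m] @ Vs))
                  (apps (Vs ! i) (map (enc g) (concat tss)))))
   \<and> (\<forall>Vs Xs. length Vs = length alphas \<longrightarrow> (\<forall>V\<in>set Vs. is_val V) \<longrightarrow> length Xs = m \<longrightarrow>
        (\<forall>X\<in>set Xs. X = err g \<or> (\<exists>t. wf_ct g ar t \<and> X = enc g t)) \<longrightarrow>
        ((\<forall>a\<in>set alphas. \<not> unifies g ar Xs a) \<or> err g \<in> set Xs) \<longrightarrow>
        (\<exists>k\<le>l. (beta_v ^^ k) (apps P (Xs @ Vs)) (err g)))"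
proof -
  define nV where "nV = length alphas"
  define J where "J = m + nV"
  from trys_red[OF J_def wf _ len, of 0] obtain l where TR:
    "\<forall>os Vs. length os = m \<longrightarrow> (\<forall>x\<in>set os. \<forall>t. x = Some t \<longrightarrow> wf_ct g ar t) \<longrightarrow>
     length Vs = nV \<longrightarrow> (\<forall>V\<in>set Vs. is_val V) \<longrightarrow>
     (case tryout alphas 0 os of
        None \<Rightarrow> red (apps (trys g ar m J alphas 0) (map (itm g) os @ Vs)) (err g) l
      | Some (i', us) \<Rightarrow> red (apps (trys g ar m J alphas 0) (map (itm g) os @ Vs)) (apps (Vs ! i') (map (enc g) us)) l)"
    by (auto simp: nV_def)
  define P where "P = trys g ar m J alphas 0"
  show ?thesis
  proof (rule exI[of _ P], rule exI[of _ l], intro conjI allI impI)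
    fix Vs i tss
    assume Vs: "length Vs = length alphas" and vVs: "\<forall>V\<in>set Vs. is_val V" and i: "i < length alphas"
      and ltss: "length tss = m" and ltj: "\<forall>j<m. length (tss ! j) = nvars (alphas ! i ! j)"
      and wtss: "\<forall>ts\<in>set tss. \<forall>t\<in>set ts. wf_ct g ar t"
    define a where "a = alphas ! i"
    have la: "length a = m" using len i by (simp add: a_def)
    define ts where "ts = map (\<lambda>j. inst (a ! j) (tss ! j)) [0..<m]"
    have ic: "insts a (concat tss) = ts \<and> length (concat tss) = sum_list (map nvars a)"
      using insts_concat[of tss a] ltss la ltj by (simp add: ts_def a_def)
    have ra: "runo a (map Some ts) = Succ (concat tss)" using runo_insts[of "concat tss" a] ic by simp
    have wts: "\<forall>t\<in>set ts. wf_ct g ar t"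
    proof
      fix t assume "t \<in> set ts"
      then obtain j where j: "j < m" "t = inst (a ! j) (tss ! j)" by (auto simp: ts_def)
      have "a \<in> set alphas" using i by (simp add: a_def)
      moreover have "a ! j \<in> set a" using j la by simp
      ultimately have "wf_pat g ar (a ! j)" using wf by blast
      moreover have "\<forall>u\<in>set (tss ! j). wf_ct g ar u" using wtss j ltss by auto
      ultimately show "wf_ct g ar t" using wf_inst(1) ltj j by (simp add: a_def)
    qed
    have insti: "is_instance g ar ts a"
      unfolding is_instance_def
    proof (intro conjI allI impI)
      show "length ts = length a" using la by (simp add: ts_def)
    next
      fix j assume j: "j < length a"
      show "\<exists>us. length us = nvars (a ! j) \<and> (\<forall>u\<in>set us. wf_ct g ar u) \<and> ts ! j = inst (a ! j) us"
        using j la ltj ltss wtss by (auto simp: ts_def a_def intro!: exI[of _ "tss ! j"])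
    qed
    have fails: "\<forall>j<i. runo (alphas ! j) (map Some ts) = Fail"
    proof (intro allI impI)
      fix j assume ji: "j < i"
      show "runo (alphas ! j) (map Some ts) = Fail"
      proof (cases "runo (alphas ! j) (map Some ts)")
        case (Succ us')
        from runo_Succ_instance[OF Succ wts] have "is_instance g ar ts (alphas ! j)"
          by (simp add: is_instance_def)
        then show ?thesis using novl insti wts ji i unfolding non_overlapping_def a_def
          by (metis order.strict_trans less_irrefl)
      next
        case Error
        then show ?thesis using runo_Error_None by fastforce
      qed simp
    qed
    have tr: "tryout alphas 0 (map Some ts) = Some (i, concat tss)"
      using tryout_first[of i alphas "map Some ts" "concat tss" 0] i fails ra by (simp add: a_def)
    have meq: "map (itm g) (map Some ts) = map (\<lambda>j. enc g (inst (alphas ! i ! j) (tss ! j))) [0..<m]"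
      by (simp add: ts_def itm_def a_def)
    have h1: "length (map Some ts) = m" by (simp add: ts_def)
    have h2: "\<And>x t. x \<in> set (map Some ts) \<Longrightarrow> x = Some t \<Longrightarrow> wf_ct g ar t" using wts by auto
    have h3: "length Vs = nV" using Vs by (simp add: nV_def)
    have h4: "\<And>V. V \<in> set Vs \<Longrightarrow> is_val V" using vVs by auto
    have "red (apps P (map (\<lambda>j. enc g (inst (alphas ! i ! j) (tss ! j))) [0..<m] @ Vs))
                         (apps (Vs ! i) (map (enc g) (concat tss))) l"
      using TR[rule_format, OF h1 h2 h3 h4] unfolding tr meq P_def by simp
    then show "\<exists>k\<le>l. (beta_v ^^ k) (apps P (map (\<lambda>j. enc g (inst (alphas ! i ! j) (tss ! j))) [0..<m] @ Vs))
                  (apps (Vs ! i) (map (enc g) (concat tss)))"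
      by (simp add: red_def)
  next
    fix Vs Xs
    assume Vs: "length Vs = length alphas" and vVs: "\<forall>V\<in>set Vs. is_val V" and lX: "length Xs = m"
      and X: "\<forall>X\<in>set Xs. X = err g \<or> (\<exists>t. wf_ct g ar t \<and> X = enc g t)"
      and nu: "(\<forall>a\<in>set alphas. \<not> unifies g ar Xs a) \<or> err g \<in> set Xs"
    define dec where "dec X = (if X = err g then None else Some (SOME t. wf_ct g ar t \<and> X = enc g t))" for X
    define os where "os = map dec Xs"
    have dX: "X \<in> set Xs \<Longrightarrow> X \<noteq> err g \<Longrightarrow> wf_ct g ar (SOME t. wf_ct g ar t \<and> X = enc g t) \<and> X = enc g (SOME t. wf_ct g ar t \<and> X = enc g t)" for X
      using X by (metis (mono_tags, lifting) someI_ex)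
    have itmX: "map (itm g) os = Xs"
    proof (rule nth_equalityI)
      show "length (map (itm g) os) = length Xs" by (simp add: os_def)
    next
      fix i assume "i < length (map (itm g) os)"
      then have i: "i < length Xs" by (simp add: os_def)
      then have "Xs ! i \<in> set Xs" by simp
      then show "map (itm g) os ! i = Xs ! i" using i dX[of "Xs ! i"]
        by (auto simp: os_def dec_def itm_def)
    qed
    have wos: "\<forall>x\<in>set os. \<forall>t. x = Some t \<longrightarrow> wf_ct g ar t"
      by (auto simp: os_def dec_def dX split: if_splits)
    have "tryout alphas 0 os = None"
    proof (rule ccontr)
      assume "tryout alphas 0 os \<noteq> None"
      then obtain i' us where "tryout alphas 0 os = Some (i', us)" by auto
      from tryout_Some[OF this] obtain a where a: "a \<in> set alphas" "runo a os = Succ us" by blast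
      have nN: "None \<notin> set os" using runo_Succ_None[OF a(2)] .
      then obtain ts where ots: "os = map Some ts"
        by (metis (no_types, lifting) ex_map_conv not_None_eq)
      have errn: "err g \<notin> set Xs"
        using nN by (auto simp: os_def dec_def)
      have wts: "\<forall>t\<in>set ts. wf_ct g ar t" using wos ots by auto
      from runo_Succ_instance[OF a(2)[unfolded ots] wts]
      have inst: "length ts = length a \<and> (\<forall>j<length a. \<exists>vs. length vs = nvars (a ! j) \<and> (\<forall>u\<in>set vs. wf_ct g ar u) \<and> ts ! j = inst (a ! j) vs)" .
      have "Xs = map (enc g) ts" using itmX ots by (simp add: itm_def comp_def)
      then have "unifies g ar Xs a" using inst unfolding unifies_def by (simp, metis)
      then show False using nu errn a(1) by blast
    qed
    moreover have h1: "length os = m" using lX by (simp add: os_def)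
    moreover have h2: "\<And>x t. x \<in> set os \<Longrightarrow> x = Some t \<Longrightarrow> wf_ct g ar t" using wos by auto
    moreover have h3: "length Vs = nV" using Vs by (simp add: nV_def)
    moreover have h4: "\<And>V. V \<in> set Vs \<Longrightarrow> is_val V" using vVs by auto
    ultimately have "red (apps P (Xs @ Vs)) (err g) l"
      using TR[rule_format, OF h1 h2 h3 h4] unfolding itmX P_def by simp
    then show "\<exists>k\<le>l. (beta_v ^^ k) (apps P (Xs @ Vs)) (err g)" by (simp add: red_def)
  qed
qed


end
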